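(* Let $\Omega$ be a finite sample space and let $P\neq Q$ be two probability distributions on $\Omega$. For every $\lambda\in(0,1)$, $$L(\lambda)\,H^2(P,Q)\le \mathrm{GJS}_\lambda(P\parallel Q)\le U(\lambda)\,H^2(P,Q)\le H^2(P,Q).$$ In particular, for $\lambda=1/2$, $\ln 2\le \mathrm{JS}(P\parallel Q)/H^2(P,Q)\le 1$.
   Context: $\mathrm{KL}(P\parallel Q)=\sum_{i:P(i)>0}P(i)\ln\frac{P(i)}{Q(i)}$. For $\lambda\in[0,1]$ and $M_\lambda=\lambda P+(1-\lambda)Q$, $\mathrm{GJS}_\lambda(P\parallel Q)=\lambda\,\mathrm{KL}(P\parallel M_\lambda)+(1-\lambda)\,\mathrm{KL}(Q\parallel M_\lambda)$, and $\mathrm{JS}=\mathrm{GJS}_{1/2}$. The squared Hellinger distance is $H^2(P,Q)=\frac12\sum_{i\in\Omega}(\sqrt{P(i)}-\sqrt{Q(i)})^2$. With $\eta(\lambda)=-\lambda\ln\lambda$, $L(\lambda)=2\min\{\eta(\lambda),\eta(1-\lambda)\}$ and $U(\lambda)=\frac{2\lambda(1-\lambda)}{1-2\lambda}\ln\frac{1-\lambda}{\lambda}$ for $\lambda\neq1/2$, $U(1/2)=1$. *)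

theory Defs
  imports Complex_Main
begin

definition is_distr :: "('a::finite \<Rightarrow> real) \<Rightarrow> bool" where
  "is_distr P \<longleftrightarrow> (\<forall>i. 0 \<le> P i) \<and> (\<Sum>i\<in>UNIV. P i) = 1"

definition KL :: "('a::finite \<Rightarrow> real) \<Rightarrow> ('a \<Rightarrow> real) \<Rightarrow> real" where
  "KL P Q = (\<Sum>i | P i > 0. P i * ln (P i / Q i))"

definition GJS :: "real \<Rightarrow> ('a::finite \<Rightarrow> real) \<Rightarrow> ('a \<Rightarrow> real) \<Rightarrow> real" where
  "GJS l P Q = (let M = (\<lambda>i. l * P i + (1 - l) * Q i) in l * KL P M + (1 - l) * KL Q M)"

definition JS :: "('a::finite \<Rightarrow> real) \<Rightarrow> ('a \<Rightarrow> real) \<Rightarrow> real" where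
  "JS P Q = GJS (1/2) P Q"

definition hellinger_sq :: "('a::finite \<Rightarrow> real) \<Rightarrow> ('a \<Rightarrow> real) \<Rightarrow> real" where
  "hellinger_sq P Q = (1/2) * (\<Sum>i\<in>UNIV. (sqrt (P i) - sqrt (Q i))^2)"

definition eta :: "real \<Rightarrow> real" where
  "eta l = - l * ln l"

definition Lfun :: "real \<Rightarrow> real" where
  "Lfun l = 2 * min (eta l) (eta (1 - l))"

definition Ufun :: "real \<Rightarrow> real" where
  "Ufun l = (if l = 1/2 then 1 else (2 * l * (1 - l)) / (1 - 2 * l) * ln ((1 - l) / l))"

end

theory Submission imports Defs "HOL-Real_Asymp.Real_Asymp"
begin

lemma ln_lower:
  fixes x :: real assumes "1 \<le> x" shows "2*(x-1)/(x+1) \<le> ln x"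
proof -
  let ?f = "\<lambda>t::real. ln t - 2*(t-1)/(t+1)"
  have "?f 1 \<le> ?f x"
  proof (rule DERIV_nonneg_imp_nondecreasing[OF assms])
    fix t :: real assume t: "1 \<le> t" "t \<le> x"
    have "DERIV ?f t :> 1/t - 4/(t+1)^2"
      using t by (auto intro!: derivative_eq_intros simp: field_simps power2_eq_square)
    moreover have "1/t - 4/(t+1)^2 = (t-1)^2/(t*(t+1)^2)"
    proof -
      have "t \<noteq> 0" "t+1 \<noteq> 0" using t by auto
      then show ?thesis by (simp add: divide_simps) (simp add: algebra_simps power2_eq_square)
    qed
    moreover have "(t-1)^2/(t*(t+1)^2) \<ge> 0" using t by simp
    ultimately show "\<exists>y. DERIV ?f t :> y \<and> 0 \<le> y" by auto
  qed
  then show ?thesis by simp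
qed

lemma ln_upper_aux:
  fixes y :: real assumes "1 < y" shows "2 * ln y < y - 1/y"
proof -
  let ?f = "\<lambda>t::real. t - 1/t - 2 * ln t"
  have "?f 1 < ?f y"
  proof (rule DERIV_pos_imp_increasing_open[OF assms])
    fix t :: real assume t: "1 < t" "t < y"
    have "DERIV ?f t :> 1 + 1/t^2 - 2/t"
      using t by (auto intro!: derivative_eq_intros simp: field_simps power2_eq_square)
    moreover have "1 + 1/t^2 - 2/t = (t-1)^2/t^2"
      using t by (simp add: field_simps power2_eq_square)
    moreover have "(t-1)^2/t^2 > 0" using t by simp
    ultimately show "\<exists>y. DERIV ?f t :> y \<and> 0 < y" by auto
  next
    show "continuous_on {1..y} ?f"
      by (intro continuous_intros) auto
  qed
  then show ?thesis by simp
qed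

lemma ln_upper:
  fixes x :: real assumes "1 < x" shows "ln x < (x-1)/sqrt x"
proof -
  have y: "1 < sqrt x" using assms by simp
  have "2 * ln (sqrt x) < sqrt x - 1 / sqrt x" by (rule ln_upper_aux[OF y])
  moreover have "2 * ln (sqrt x) = ln x" using assms by (simp add: ln_sqrt)
  moreover have "sqrt x - 1/sqrt x = (x-1)/sqrt x"
    using assms by (simp add: field_simps)
  ultimately show ?thesis by simp
qed

definition gg :: "real \<Rightarrow> real \<Rightarrow> real \<Rightarrow> real" where
  "gg a b t = b*t*ln t - (b*t+a)*ln(b*t+a)"
definition Phi :: "real \<Rightarrow> real \<Rightarrow> real \<Rightarrow> real \<Rightarrow> real" where
  "Phi a b C s = (C*(s-1)^2 - gg a b (s^2)) / (b*s^2+a)"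
definition psi :: "real \<Rightarrow> real \<Rightarrow> real \<Rightarrow> real \<Rightarrow> real" where
  "psi a b C s = C*(b*s + a - b - a/s) - 2*a*b*ln s"
definition qq :: "real \<Rightarrow> real \<Rightarrow> real \<Rightarrow> real \<Rightarrow> real" where
  "qq a b C s = C*(b*s^2+a) - 2*a*b*s"

lemma Phi_deriv:
  assumes "a > 0" "b > 0" "s > 0"
  shows "DERIV (Phi a b C) s :> 2*s*psi a b C s/(b*s^2+a)^2"
proof -
  let ?E = "\<lambda>x. (C*(x-1)^2 - 2*b*x^2*ln x + (b*x^2+a)*ln(b*x^2+a)) / (b*x^2+a)"
  have m: "b*s^2+a > 0" using assms by (simp add: add_pos_nonneg)
  have md: "b*s^2+a \<noteq> 0" using m by simp
  have d: "DERIV ?E s :> 2*s*psi a b C s/(b*s^2+a)^2"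
    using assms m unfolding psi_def
    apply (auto intro!: derivative_eq_intros)
    apply (simp add: divide_simps md)
    apply (simp add: algebra_simps power2_eq_square)
    done
  show ?thesis
  proof (rule has_field_derivative_transform_within_open[OF d, of "{0<..}"])
    fix z :: real assume "z \<in> {0<..}"
    then have "ln (z^2) = 2 * ln z" by (simp add: ln_realpow)
    then show "?E z = Phi a b C z" unfolding Phi_def gg_def by simp
  qed (use assms in auto)
qed

lemma psi_deriv:
  assumes "s > 0"
  shows "DERIV (psi a b C) s :> qq a b C s / s^2"
proof -
  have "DERIV (psi a b C) s :> C*(b + a/s^2) - 2*a*b/s"
    unfolding psi_def using assms
    by (auto intro!: derivative_eq_intros simp: field_simps power2_eq_square)
  moreover have "C*(b + a/s^2) - 2*a*b/s = qq a b C s / s^2"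
    unfolding qq_def using assms by (simp add: field_simps power2_eq_square)
  ultimately show ?thesis by simp
qed


lemma m_pos: "a > 0 \<Longrightarrow> b > 0 \<Longrightarrow> b*s^2+a > (0::real)"
  by (simp add: add_nonneg_pos)

lemma Phi_mono:
  assumes "a > 0" "b > 0" "0 < x" "x \<le> y" "\<And>t. x \<le> t \<Longrightarrow> t \<le> y \<Longrightarrow> psi a b C t \<ge> 0"
  shows "Phi a b C x \<le> Phi a b C y"
proof (rule DERIV_nonneg_imp_nondecreasing[OF assms(4)])
  fix t assume t: "x \<le> t" "t \<le> y"
  have "DERIV (Phi a b C) t :> 2*t*psi a b C t/(b*t^2+a)^2"
    using assms t by (intro Phi_deriv) auto
  moreover have "2*t*psi a b C t/(b*t^2+a)^2 \<ge> 0"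
    using assms t m_pos[of a b t] by (intro divide_nonneg_pos mult_nonneg_nonneg) auto
  ultimately show "\<exists>y. DERIV (Phi a b C) t :> y \<and> 0 \<le> y" by blast
qed

lemma Phi_anti:
  assumes "a > 0" "b > 0" "0 < x" "x \<le> y" "\<And>t. x \<le> t \<Longrightarrow> t \<le> y \<Longrightarrow> psi a b C t \<le> 0"
  shows "Phi a b C x \<ge> Phi a b C y"
proof (rule DERIV_nonpos_imp_nonincreasing[OF assms(4)])
  fix t assume t: "x \<le> t" "t \<le> y"
  have "DERIV (Phi a b C) t :> 2*t*psi a b C t/(b*t^2+a)^2"
    using assms t by (intro Phi_deriv) auto
  moreover have "2*t*psi a b C t/(b*t^2+a)^2 \<le> 0"
    using assms t m_pos[of a b t] by (intro divide_nonpos_pos mult_nonneg_nonpos) auto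
  ultimately show "\<exists>y. DERIV (Phi a b C) t :> y \<and> y \<le> 0" by blast
qed

lemma psi_mono:
  assumes "0 < x" "x \<le> y" "\<And>t. x \<le> t \<Longrightarrow> t \<le> y \<Longrightarrow> qq a b C t \<ge> 0"
  shows "psi a b C x \<le> psi a b C y"
proof (rule DERIV_nonneg_imp_nondecreasing[OF assms(2)])
  fix t assume t: "x \<le> t" "t \<le> y"
  have "DERIV (psi a b C) t :> qq a b C t / t^2"
    using assms t by (intro psi_deriv) auto
  moreover have "qq a b C t / t^2 \<ge> 0"
    using assms t by auto
  ultimately show "\<exists>y. DERIV (psi a b C) t :> y \<and> 0 \<le> y" by blast
qed

lemma psi_anti:
  assumes "0 < x" "x \<le> y" "\<And>t. x \<le> t \<Longrightarrow> t \<le> y \<Longrightarrow> qq a b C t \<le> 0"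
  shows "psi a b C x \<ge> psi a b C y"
proof (rule DERIV_nonpos_imp_nonincreasing[OF assms(2)])
  fix t assume t: "x \<le> t" "t \<le> y"
  have "DERIV (psi a b C) t :> qq a b C t / t^2"
    using assms t by (intro psi_deriv) auto
  moreover have "qq a b C t / t^2 \<le> 0"
    using assms t by (auto intro: divide_nonpos_pos)
  ultimately show "\<exists>y. DERIV (psi a b C) t :> y \<and> y \<le> 0" by blast
qed

lemma qq_convex:
  assumes "C*b \<ge> 0" "z \<le> w" "w \<le> r" "qq a b C z \<le> 0" "qq a b C r \<le> 0"
  shows "qq a b C w \<le> 0"
proof (cases "z = r")
  case True then show ?thesis using assms by auto
next
  case False
  then have rz: "r - z > 0" using assms by auto
  have id: "(r-z) * qq a b C w = (r-w)*qq a b C z + (w-z)*qq a b C r + (C*b)*((w-z)*(r-w))*(z-r)"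
    unfolding qq_def by (simp add: algebra_simps power2_eq_square)
  have "(r-w)*qq a b C z \<le> 0" using assms by (intro mult_nonneg_nonpos) auto
  moreover have "(w-z)*qq a b C r \<le> 0" using assms by (intro mult_nonneg_nonpos) auto
  moreover have "(C*b)*((w-z)*(r-w))*(z-r) \<le> 0"
  proof -
    have "(w-z)*(r-w) \<ge> 0" using assms by auto
    then have "(C*b)*((w-z)*(r-w)) \<ge> 0" using assms(1) by simp
    then show ?thesis using rz by (simp add: mult_nonneg_nonpos)
  qed
  ultimately have "(r-z) * qq a b C w \<le> 0" using id by linarith
  then show ?thesis using rz by (simp add: mult_le_0_iff)
qed

lemma psi_1: "psi a b C 1 = 0" unfolding psi_def by simp

lemma Phi_1: "a + b = 1 \<Longrightarrow> Phi a b C 1 = 0"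
  unfolding Phi_def gg_def by (simp add: add.commute)


lemma sq_ln_lim: "((\<lambda>s::real. s^2 * ln (s^2)) \<longlongrightarrow> 0) (at_right 0)"
  by real_asymp

lemma gg_lim:
  assumes "a > 0"
  shows "((\<lambda>x. gg a b (x^2)) \<longlongrightarrow> gg a b 0) (at_right 0)"
proof -
  have e: "(\<lambda>x. gg a b (x^2)) = (\<lambda>x. b * (x^2 * ln (x^2)) - (b*x^2+a)*ln(b*x^2+a))"
    unfolding gg_def by (auto simp: algebra_simps)
  have "((\<lambda>x. b * (x^2 * ln (x^2)) - (b*x^2+a)*ln(b*x^2+a)) \<longlongrightarrow> b * 0 - (b*0^2+a)*ln(b*0^2+a)) (at_right 0)"
    using assms by (intro tendsto_intros sq_ln_lim) auto
  moreover have g0: "gg a b 0 = b * 0 - (b*0^2+a)*ln(b*0^2+a)" by (simp add: gg_def)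
  ultimately show ?thesis by (simp only: e g0)
qed

lemma Phi_lim:
  assumes "a > 0"
  shows "(Phi a b C \<longlongrightarrow> Phi a b C 0) (at_right 0)"
proof -
  have "((\<lambda>x. (C*(x-1)^2 - gg a b (x^2)) / (b*x^2+a)) \<longlongrightarrow> (C*(0-1)^2 - gg a b (0^2)) / (b*0^2+a)) (at_right 0)"
  proof -
    have l: "((\<lambda>x. gg a b (x^2)) \<longlongrightarrow> gg a b (0^2)) (at_right 0)" using gg_lim[OF assms] by simp
    show ?thesis using assms by (intro tendsto_intros l) auto
  qed
  then show ?thesis unfolding Phi_def[abs_def] by simp
qed

lemma lower_01:
  assumes ab: "a + b = 1" and pos: "0 < a" "0 < b" and C: "0 \<le> C" "C \<le> - a * ln a" "C \<le> 2*a*b"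
    and s: "0 \<le> s" "s \<le> 1"
  shows "C*(s-1)^2 \<le> gg a b (s^2)"
proof -
  have m: "b*s^2+a > 0" using m_pos pos by blast
  have Phi0: "Phi a b C 0 \<le> 0"
    using C pos unfolding Phi_def gg_def by (simp add: divide_nonpos_pos)
  have Phi1: "Phi a b C 1 = 0" using Phi_1 ab by blast
  have q1: "qq a b C 1 \<le> 0" unfolding qq_def using ab C by (simp add: algebra_simps)
  have "Phi a b C s \<le> 0"
  proof (cases "s = 0")
    case True then show ?thesis using Phi0 by simp
  next
    case False
    then have s0: "0 < s" using s by simp
    show ?thesis
    proof (cases "\<forall>t. s \<le> t \<longrightarrow> t \<le> 1 \<longrightarrow> psi a b C t \<ge> 0")
      case True
      then have "Phi a b C s \<le> Phi a b C 1"
        using pos s0 s by (intro Phi_mono) auto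
      then show ?thesis using Phi1 by simp
    next
      case False
      then obtain t where t: "s \<le> t" "t \<le> 1" "psi a b C t < 0" by auto
      have neg: "psi a b C \<tau> \<le> 0" if tau: "0 < \<tau>" "\<tau> \<le> t" for \<tau>
      proof -
        have "qq a b C p \<ge> 0" if p: "\<tau> \<le> p" "p \<le> t" for p
        proof (rule ccontr)
          assume "\<not> qq a b C p \<ge> 0"
          then have qp: "qq a b C p \<le> 0" by simp
          have "qq a b C w \<le> 0" if "t \<le> w" "w \<le> 1" for w
            using qq_convex[of C b p w 1 a] qp q1 C pos p that by auto
          then have "psi a b C t \<ge> psi a b C 1"
            using t tau by (intro psi_anti) auto
          then show False using t psi_1 by simp
        qed
        then have "psi a b C \<tau> \<le> psi a b C t" using tau by (intro psi_mono) auto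
        then show ?thesis using t by simp
      qed
      have ev: "\<forall>\<^sub>F x in at_right 0. Phi a b C s \<le> Phi a b C x"
        unfolding eventually_at_right_field
      proof (intro exI[of _ s] conjI allI impI)
        show "0 < s" by fact
        fix x assume "0 < x" "x < s"
        then show "Phi a b C s \<le> Phi a b C x"
          using pos t neg by (intro Phi_anti) auto
      qed
      have "Phi a b C s \<le> Phi a b C 0"
        by (rule tendsto_lowerbound[OF Phi_lim[OF pos(1)] ev]) simp
      then show ?thesis using Phi0 by simp
    qed
  qed
  then have "C*(s-1)^2 - gg a b (s^2) \<le> 0"
    using m unfolding Phi_def by (simp add: divide_le_0_iff)
  then show ?thesis by simp
qed


lemma upper_pos:
  assumes ab: "a + b = 1" and pos: "0 < b" "b \<le> a"
    and C: "2*a*b \<le> C" "C \<le> sqrt (a*b)" "C*(a-b) = a*b*ln(a/b)"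
    and s0: "0 < s"
  shows "gg a b (s^2) \<le> C*(s-1)^2"
proof -
  have a0: "0 < a" using pos by simp
  define \<rho> where "\<rho> = sqrt (a/b)"
  have \<rho>1: "1 \<le> \<rho>" unfolding \<rho>_def using pos by simp
  have \<rho>sq: "\<rho>^2 = a/b" unfolding \<rho>_def using pos a0 by simp
  have b\<rho>: "b*\<rho> = sqrt(a*b)" unfolding \<rho>_def using pos a0
    by (simp add: real_sqrt_divide real_sqrt_mult field_simps)
  have a\<rho>: "a/\<rho> = sqrt(a*b)" unfolding \<rho>_def using pos a0
    by (simp add: real_sqrt_divide real_sqrt_mult field_simps)
  have ln\<rho>: "ln \<rho> = ln(a/b)/2" unfolding \<rho>_def using pos a0 by (simp add: ln_sqrt)
  have Cpos: "0 \<le> C" using C pos a0 by (smt (verit) mult_pos_pos)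
  have Ca: "C \<le> a"
  proof -
    have "sqrt(a*b) \<le> sqrt(a*a)" using pos a0 by (intro real_sqrt_le_mono) simp
    then show ?thesis using C a0 by simp
  qed
  have psi\<rho>: "psi a b C \<rho> = 0"
  proof -
    have "psi a b C \<rho> = C*(b*\<rho> + a - b - a/\<rho>) - 2*a*b*ln \<rho>" by (simp add: psi_def)
    also have "\<dots> = C*(a-b) - a*b*ln(a/b)" using b\<rho> a\<rho> ln\<rho> by simp
    finally show ?thesis using C by simp
  qed
  have refl: "psi a b C (a/(b*x)) = - psi a b C x" if x: "0 < x" for x
  proof -
    have l: "ln (a/(b*x)) = ln(a/b) - ln x" using x pos a0
      by (simp add: ln_div ln_mult)
    have "psi a b C (a/(b*x)) + psi a b C x = 2*(C*(a-b) - a*b*ln(a/b))"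
      unfolding psi_def l using x pos a0 by (simp add: field_simps)
    then show ?thesis using C by simp
  qed
  have Phi1: "Phi a b C 1 = 0" using Phi_1 ab by blast
  have Phiab: "Phi a b C (a/b) = 0"
  proof -
    have e1: "b*(a/b)^2 + a = a/b" using pos a0 ab
      by (simp add: field_simps power2_eq_square) (metis distrib_left mult.commute mult_1)
    have e2: "ln ((a/b)^2) = 2*ln(a/b)" using pos a0 by (simp add: ln_realpow)
    have "gg a b ((a/b)^2) = b*(a/b)^2 * (2*ln(a/b)) - (a/b)*ln(a/b)"
      unfolding gg_def e1 e2 by simp
    also have "\<dots> = (a/b)*(a-b)*ln(a/b)"
    proof -
      have hL: "a*(a*ln(a/b)) + a*(b*ln(a/b)) = a*ln(a/b)"
      proof -
        have "a*(a*ln(a/b)) + a*(b*ln(a/b)) = a*((a+b)*ln(a/b))" by (simp add: algebra_simps)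
        then show ?thesis using ab by simp
      qed
      show ?thesis using pos a0 ab
        by (simp add: field_simps power2_eq_square) (use hL in simp)
    qed
    also have "\<dots> = C*(a/b-1)^2"
    proof -
      have "C*(a/b-1)^2 = (C*(a-b))*(a-b)/b^2" using pos by (simp add: field_simps power2_eq_square)
      also have "\<dots> = (a/b)*(a-b)*ln(a/b)" unfolding C(3) using pos by (simp add: field_simps power2_eq_square)
      finally show ?thesis by simp
    qed
    finally show ?thesis unfolding Phi_def by simp
  qed
  have q1: "qq a b C w \<ge> 0" if w: "0 < w" "w \<le> 1" for w
  proof -
    have "qq a b C w - qq a b C 1 = b*(w-1)*(C*(w+1) - 2*a)"
      unfolding qq_def by (simp add: algebra_simps power2_eq_square)
    moreover have "b*(w-1)*(C*(w+1) - 2*a) \<ge> 0"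
    proof -
      have "C*(w+1) \<le> C*2" using w Cpos by (intro mult_left_mono) auto
      then have "C*(w+1) - 2*a \<le> 0" using Ca by simp
      moreover have "b*(w-1) \<le> 0" using w pos by (simp add: mult_nonneg_nonpos)
      ultimately show ?thesis by (simp add: mult_nonpos_nonpos)
    qed
    moreover have "qq a b C 1 \<ge> 0" unfolding qq_def using ab C by (simp add: algebra_simps)
    ultimately show ?thesis by linarith
  qed
  have q\<rho>: "qq a b C \<rho> \<le> 0"
  proof -
    have "qq a b C \<rho> = C*(b*\<rho>^2+a) - 2*a*(b*\<rho>)" unfolding qq_def by (simp add: algebra_simps)
    also have "\<dots> = 2*a*(C - sqrt(a*b))" unfolding \<rho>sq b\<rho> using pos by (simp add: field_simps)
    finally show ?thesis using C a0 by (simp add: mult_nonneg_nonpos)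
  qed
  have S1: "psi a b C x \<le> 0" if "0 < x" "x \<le> 1" for x
  proof -
    have "psi a b C x \<le> psi a b C 1" using that q1 by (intro psi_mono) auto
    then show ?thesis using psi_1 by simp
  qed
  have S2: "psi a b C x \<ge> 0" if x: "1 \<le> x" "x \<le> \<rho>" for x
  proof (cases "\<forall>z. 1 \<le> z \<longrightarrow> z \<le> x \<longrightarrow> qq a b C z \<ge> 0")
    case True
    then have "psi a b C 1 \<le> psi a b C x" using x by (intro psi_mono) auto
    then show ?thesis using psi_1 by simp
  next
    case False
    then obtain z where z: "1 \<le> z" "z \<le> x" "qq a b C z < 0" by auto
    have "qq a b C w \<le> 0" if "x \<le> w" "w \<le> \<rho>" for w
      using qq_convex[of C b z w \<rho> a] z q\<rho> Cpos pos that by auto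
    then have "psi a b C x \<ge> psi a b C \<rho>" using x by (intro psi_anti) auto
    then show ?thesis using psi\<rho> by simp
  qed
  have S3: "psi a b C x \<le> 0" if x: "\<rho> \<le> x" "x \<le> a/b" for x
  proof -
    have x0: "0 < x" using x \<rho>1 by simp
    have "1 \<le> a/(b*x)" using x x0 pos by (simp add: field_simps)
    moreover have "a/(b*x) \<le> \<rho>"
    proof -
      have "a/b = \<rho>*\<rho>" using \<rho>sq by (simp add: power2_eq_square)
      then have "a = b*(\<rho>*\<rho>)" using pos by (simp add: field_simps)
      then have "a \<le> b*(\<rho>*x)" using x pos \<rho>1 by (simp add: mult_left_mono)
      then show ?thesis using x0 pos by (simp add: field_simps)
    qed
    ultimately have "psi a b C (a/(b*x)) \<ge> 0" by (rule S2)
    then show ?thesis using refl[OF x0] by simp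
  qed
  have S4: "psi a b C x \<ge> 0" if x: "a/b \<le> x" for x
  proof -
    have x0: "0 < x" using x pos a0 by (smt (verit) divide_pos_pos)
    have "0 < a/(b*x)" using x0 pos a0 by simp
    moreover have "a/(b*x) \<le> 1" using x x0 pos by (simp add: field_simps)
    ultimately have "psi a b C (a/(b*x)) \<le> 0" by (rule S1)
    then show ?thesis using refl[OF x0] by simp
  qed
  have \<rho>ab: "\<rho> \<le> a/b"
  proof -
    have "\<rho>*1 \<le> \<rho>*\<rho>" using \<rho>1 by (intro mult_left_mono) auto
    then show ?thesis using \<rho>sq by (simp add: power2_eq_square)
  qed
  have "Phi a b C s \<ge> 0"
  proof -
    consider "s \<le> 1" | "1 \<le> s" "s \<le> \<rho>" | "\<rho> \<le> s" "s \<le> a/b" | "a/b \<le> s" by linarith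
    then show ?thesis
    proof cases
      case 1
      then have "Phi a b C s \<ge> Phi a b C 1" using s0 a0 pos S1 by (intro Phi_anti) auto
      then show ?thesis using Phi1 by simp
    next
      case 2
      then have "Phi a b C 1 \<le> Phi a b C s" using a0 pos S2 by (intro Phi_mono) auto
      then show ?thesis using Phi1 by simp
    next
      case 3
      then have "Phi a b C s \<ge> Phi a b C (a/b)" using s0 a0 pos S3 by (intro Phi_anti) auto
      then show ?thesis using Phiab by simp
    next
      case 4
      then have "Phi a b C (a/b) \<le> Phi a b C s" using a0 pos S4 by (intro Phi_mono) auto
      then show ?thesis using Phiab by simp
    qed
  qed
  moreover have "b*s^2+a > 0" using m_pos pos a0 by blast
  ultimately have "C*(s-1)^2 - gg a b (s^2) \<ge> 0"
    unfolding Phi_def by (simp add: zero_le_divide_iff)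
  then show ?thesis by simp
qed


lemma eta_nonneg: "0 < x \<Longrightarrow> x \<le> 1 \<Longrightarrow> 0 \<le> eta x"
  unfolding eta_def by (simp add: mult_nonneg_nonpos)

lemma eta_le: assumes "1/2 \<le> x" "x < 1" shows "eta x \<le> 2*x*(1-x)"
proof -
  have x0: "0 < x" using assms by simp
  have "ln (1/x) \<le> 1/x - 1" using x0 by (intro ln_le_minus_one) simp
  moreover have "ln (1/x) = - ln x" using x0 by (simp add: ln_div)
  moreover have "1/x - 1 \<le> 2*(1-x)"
  proof -
    have "1/x - 1 = (1-x)/x" using x0 by (simp add: field_simps)
    also have "\<dots> \<le> (1-x)/(1/2)" using assms by (intro divide_left_mono) auto
    finally show ?thesis by simp
  qed
  ultimately have "- ln x \<le> 2*(1-x)" by simp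
  then have "x*(- ln x) \<le> x*(2*(1-x))" using x0 by (intro mult_left_mono) auto
  then show ?thesis unfolding eta_def by (simp add: algebra_simps)
qed

lemma neg_helper: "(x::real)/(-y)*(-z) = x/y*z" by simp

lemma Ufun_sym: assumes "0 < l" "l < 1" shows "Ufun (1-l) = Ufun l"
proof (cases "l = 1/2")
  case True then show ?thesis by (simp add: Ufun_def)
next
  case False
  then have "1 - l \<noteq> 1/2" by auto
  have ln: "ln (l/(1-l)) = - ln ((1-l)/l)" using assms by (simp add: ln_div)
  have "Ufun (1-l) = (2*(1-l)*(1-(1-l)))/(1-2*(1-l)) * ln((1-(1-l))/(1-l))"
    using \<open>1 - l \<noteq> 1/2\<close> by (simp add: Ufun_def)
  also have "\<dots> = (2*(1-l)*l)/(-(1-2*l)) * (- ln((1-l)/l))" using ln by simp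
  also have "\<dots> = (2*(1-l)*l)/(1-2*l) * ln((1-l)/l)" by (rule neg_helper)
  also have "\<dots> = (2*l*(1-l))/(1-2*l) * ln((1-l)/l)" by (simp only: mult.assoc mult.commute[of "1-l" l])
  also have "\<dots> = Ufun l" using False by (simp add: Ufun_def)
  finally show ?thesis .
qed

lemma cU_facts:
  assumes "0 < l" "l \<le> 1/2"
  shows "2*(1-l)*l \<le> Ufun l/2 \<and> Ufun l/2 \<le> sqrt((1-l)*l) \<and> Ufun l/2*((1-l)-l) = (1-l)*l*ln((1-l)/l)"
proof (cases "l = 1/2")
  case True
  have "sqrt (1/4::real) = 1/2" by (simp add: real_sqrt_divide)
  moreover have "(1 - 1/2) * (1/2) = (1/4::real)" by simp
  ultimately show ?thesis unfolding True by (simp add: Ufun_def)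
next
  case False
  define a where "a = 1 - l"
  define b where "b = l"
  have ab: "a + b = 1" "0 < b" "b < a" using assms False unfolding a_def b_def by auto
  have U: "Ufun l/2 = a*b*ln(a/b)/(a-b)"
    using False unfolding Ufun_def a_def b_def by (simp add: field_simps)
  define x where "x = a/b"
  have x1: "1 < x" unfolding x_def using ab by simp
  have lo: "2*(x-1)/(x+1) \<le> ln x" using ln_lower x1 by simp
  have "2*(x-1)/(x+1) = 2*(a-b)" unfolding x_def using ab by (simp add: field_simps)
  then have lo': "2*(a-b) \<le> ln(a/b)" using lo unfolding x_def by simp
  have up: "ln x < (x-1)/sqrt x" using ln_upper x1 by simp
  have "b * sqrt(a/b) = sqrt(a*b)" using ab by (simp add: real_sqrt_divide real_sqrt_mult field_simps)
  then have "(x-1)/sqrt x = (a-b)/sqrt(a*b)" unfolding x_def using ab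
    by (simp add: field_simps)
  then have up': "ln(a/b) \<le> (a-b)/sqrt(a*b)" using up unfolding x_def by simp
  have amb: "0 < a - b" using ab by simp
  have sab: "0 < sqrt(a*b)" using ab by simp
  have c1: "2*a*b \<le> a*b*ln(a/b)/(a-b)"
  proof -
    have "a*b*(2*(a-b)) \<le> a*b*ln(a/b)" using lo' ab by (intro mult_left_mono) auto
    then show ?thesis using amb by (simp add: field_simps)
  qed
  have c2: "a*b*ln(a/b)/(a-b) \<le> sqrt(a*b)"
  proof -
    have "a*b*ln(a/b) \<le> a*b*((a-b)/sqrt(a*b))" using up' ab by (intro mult_left_mono) auto
    also have "\<dots> = sqrt(a*b)*(a-b)"
      using sab ab by (simp add: field_simps)
    finally show ?thesis using amb by (simp add: field_simps)
  qed
  have c3: "a*b*ln(a/b)/(a-b)*(a-b) = a*b*ln(a/b)" using amb by simp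
  have U': "Ufun l/2 = (1-l)*l*ln((1-l)/l)/((1-l)-l)" using U unfolding a_def b_def .
  show ?thesis unfolding U' using c1 c2 c3 unfolding a_def b_def by blast
qed

lemma Ufun_le: assumes "0 < l" "l < 1" shows "Ufun l/2 \<le> sqrt((1-l)*l)" "Ufun l \<le> 1"
proof -
  have "Ufun l/2 \<le> sqrt((1-l)*l)"
  proof (cases "l \<le> 1/2")
    case True then show ?thesis using cU_facts assms by blast
  next
    case False
    then have "Ufun (1-l)/2 \<le> sqrt((1-(1-l))*(1-l))" using cU_facts[of "1-l"] assms by auto
    then show ?thesis using Ufun_sym[OF assms] by (simp add: mult.commute)
  qed
  then show "Ufun l/2 \<le> sqrt((1-l)*l)" .
  moreover have "sqrt((1-l)*l) \<le> 1/2"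
  proof -
    have "(1-l)*l = 1/4 - (l-1/2)^2" by (simp add: power2_eq_square algebra_simps)
    then have "(1-l)*l \<le> 1/4" by simp
    then have "sqrt((1-l)*l) \<le> sqrt(1/4)" by (rule real_sqrt_le_mono)
    also have "sqrt(1/4::real) = 1/2" by (simp add: real_sqrt_divide)
    finally show ?thesis .
  qed
  ultimately show "Ufun l \<le> 1" by simp
qed

lemma gg_sym:
  assumes "0 < a" "0 < b" "0 < s"
  shows "gg a b (s^2) = s^2 * gg b a ((1/s)^2)"
proof -
  define u where "u = s^2"
  have u0: "0 < u" unfolding u_def using assms by simp
  have m0: "0 < b*u + a" using assms u0 by (simp add: add_pos_pos)
  have e1: "(1/s)^2 = 1/u" unfolding u_def by (simp add: power_divide)
  have e2: "a*(1/u) + b = (b*u+a)/u" using u0 by (simp add: field_simps)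
  have l1: "ln (1/u) = - ln u" using u0 by (simp add: ln_div)
  have l2: "ln ((b*u+a)/u) = ln (b*u+a) - ln u" using u0 m0 by (simp add: ln_div)
  have "s^2 * gg b a ((1/s)^2) = u * (a*(1/u)*ln(1/u) - ((b*u+a)/u)*ln((b*u+a)/u))"
    unfolding gg_def e1 e2 u_def[symmetric] by simp
  also have "\<dots> = gg a b u" unfolding l1 l2 gg_def using u0 by (simp add: field_simps)
  finally show ?thesis unfolding u_def by simp
qed

lemma upper_all_pos:
  assumes "0 < l" "l < 1" "0 < s"
  shows "gg (1-l) l (s^2) \<le> (Ufun l/2)*(s-1)^2"
proof (cases "l \<le> 1/2")
  case True
  show ?thesis using cU_facts[OF assms(1) True] assms True
    by (intro upper_pos) auto
next
  case False
  have "gg l (1-l) ((1/s)^2) \<le> (Ufun (1-l)/2)*(1/s-1)^2"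
  proof -
    have "gg (1-(1-l)) (1-l) ((1/s)^2) \<le> (Ufun (1-l)/2)*(1/s-1)^2"
      using cU_facts[of "1-l"] assms False by (intro upper_pos) auto
    then show ?thesis by simp
  qed
  then have le: "s^2 * gg l (1-l) ((1/s)^2) \<le> s^2 * ((Ufun l/2)*(1/s-1)^2)"
    using Ufun_sym[OF assms(1,2)] by (intro mult_left_mono) auto
  have e2: "s^2*(1/s-1)^2 = (s-1)^2" using assms by (simp add: field_simps power2_eq_square)
  have "gg (1-l) l (s^2) = s^2 * gg l (1-l) ((1/s)^2)" using gg_sym[of "1-l" l s] assms by simp
  also have "\<dots> \<le> s^2 * ((Ufun l/2)*(1/s-1)^2)" by (rule le)
  also have "\<dots> = (Ufun l/2)*(s^2*(1/s-1)^2)" by (simp add: ac_simps)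
  also have "\<dots> = (Ufun l/2)*(s-1)^2" using e2 by simp
  finally show ?thesis .
qed

lemma upper_all:
  assumes "0 < l" "l < 1" "0 \<le> s"
  shows "gg (1-l) l (s^2) \<le> (Ufun l/2)*(s-1)^2"
proof (cases "s = 0")
  case False then show ?thesis using upper_all_pos assms by simp
next
  case True
  have l1: "((\<lambda>x. gg (1-l) l (x^2)) \<longlongrightarrow> gg (1-l) l 0) (at_right 0)"
    using gg_lim assms by simp
  have l2: "((\<lambda>x. (Ufun l/2)*(x-1)^2) \<longlongrightarrow> (Ufun l/2)*(0-1)^2) (at_right 0)"
    by (intro tendsto_intros)
  have ev: "\<forall>\<^sub>F x in at_right 0. gg (1-l) l (x^2) \<le> (Ufun l/2)*(x-1)^2"
    unfolding eventually_at_right_field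
    using upper_all_pos[OF assms(1,2)] by (intro exI[of _ 1]) auto
  have "gg (1-l) l 0 \<le> (Ufun l/2)*(0-1)^2"
    by (rule tendsto_le[OF _ l2 l1 ev]) simp
  then show ?thesis using True by simp
qed

lemma lower_all:
  assumes "0 < l" "l < 1" "0 \<le> s"
  shows "(Lfun l/2)*(s-1)^2 \<le> gg (1-l) l (s^2)"
proof -
  define C where "C = Lfun l/2"
  have C: "C = min (eta l) (eta (1-l))" unfolding C_def Lfun_def by simp
  have C0: "0 \<le> C" unfolding C using eta_nonneg assms by simp
  have C2: "C \<le> 2*(1-l)*l"
  proof (cases "l \<le> 1/2")
    case True
    then have "eta (1-l) \<le> 2*(1-l)*(1-(1-l))" using assms by (intro eta_le) auto
    then show ?thesis unfolding C by simp
  next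
    case False
    then have "eta l \<le> 2*l*(1-l)" using assms by (intro eta_le) auto
    then show ?thesis unfolding C by (simp add: mult.commute mult.left_commute)
  qed
  have Ca: "C \<le> - (1-l)*ln(1-l)" unfolding C eta_def by simp
  have Cb: "C \<le> - l*ln l" unfolding C eta_def by simp
  have C2a: "C \<le> 2*(1-l)*l" using C2 by simp
  have C2b: "C \<le> 2*l*(1-l)" using C2 by (simp add: algebra_simps)
  show ?thesis
  proof (cases "s \<le> 1")
    case True
    show ?thesis unfolding C_def[symmetric]
      using lower_01[of "1-l" l C s] C0 C2a Ca assms True by simp
  next
    case False
    then have s0: "0 < s" by simp
    have "C*(1/s-1)^2 \<le> gg l (1-l) ((1/s)^2)"
      using lower_01[of l "1-l" C "1/s"] C0 C2b Cb assms False s0 by simp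
    then have le: "s^2 * (C*(1/s-1)^2) \<le> s^2 * gg l (1-l) ((1/s)^2)"
      by (intro mult_left_mono) auto
    have e2: "s^2*(1/s-1)^2 = (s-1)^2" using s0 by (simp add: field_simps power2_eq_square)
    have "C*(s-1)^2 = C*(s^2*(1/s-1)^2)" using e2 by simp
    also have "\<dots> = s^2 * (C*(1/s-1)^2)" by (simp add: ac_simps)
    also have "\<dots> \<le> s^2 * gg l (1-l) ((1/s)^2)" by (rule le)
    also have "\<dots> = gg (1-l) l (s^2)" using gg_sym[of "1-l" l s] assms s0 by simp
    finally show ?thesis unfolding C_def .
  qed
qed

definition TT :: "real \<Rightarrow> real \<Rightarrow> real \<Rightarrow> real \<Rightarrow> real" where
  "TT a b p q = b*p*ln p + a*q*ln q - (b*p+a*q)*ln(b*p+a*q)"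

lemma TT_q:
  assumes "0 < a" "0 < b" "0 \<le> p" "0 < q"
  shows "TT a b p q = q * gg a b (p/q)"
proof (cases "p = 0")
  case True
  have "ln (a*q) = ln a + ln q" using assms by (simp add: ln_mult)
  then show ?thesis using True unfolding TT_def gg_def by (simp add: algebra_simps)
next
  case False
  then have p: "0 < p" using assms by simp
  have m: "0 < b*p + a*q" using assms p by (simp add: add_pos_pos)
  have l1: "ln (p/q) = ln p - ln q" using p assms by (simp add: ln_div)
  have e: "b*(p/q) + a = (b*p+a*q)/q" using assms by (simp add: field_simps)
  have l2: "ln ((b*p+a*q)/q) = ln (b*p+a*q) - ln q" using m assms by (simp add: ln_div)
  have "q * gg a b (p/q) = q*(b*(p/q)*(ln p - ln q)) - q*((b*p+a*q)/q)*(ln (b*p+a*q) - ln q)"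
    unfolding gg_def e l1 l2 by (simp only: right_diff_distrib mult.assoc)
  also have "\<dots> = b*p*(ln p - ln q) - (b*p+a*q)*(ln(b*p+a*q) - ln q)" using assms by simp
  also have "\<dots> = TT a b p q" unfolding TT_def by (simp add: algebra_simps)
  finally show ?thesis by simp
qed

lemma TT_0:
  assumes "0 < b" "0 \<le> p"
  shows "TT a b p 0 = eta b * p"
proof (cases "p = 0")
  case True then show ?thesis unfolding TT_def by simp
next
  case False
  then have p: "0 < p" using assms by simp
  have "ln (b*p) = ln b + ln p" using assms p by (simp add: ln_mult)
  then show ?thesis unfolding TT_def eta_def by (simp add: algebra_simps)
qed

lemma pointwise:
  assumes l: "0 < l" "l < 1" and pq: "0 \<le> p" "0 \<le> q"
  shows "(Lfun l/2) * (sqrt p - sqrt q)^2 \<le> TT (1-l) l p q \<and>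
         TT (1-l) l p q \<le> (Ufun l/2) * (sqrt p - sqrt q)^2"
proof (cases "q = 0")
  case True
  have T: "TT (1-l) l p q = eta l * p" using TT_0 l pq True by simp
  have h: "(sqrt p - sqrt q)^2 = p" using True pq by simp
  have L: "Lfun l/2 \<le> eta l" unfolding Lfun_def by simp
  have U: "eta l \<le> Ufun l/2"
  proof -
    have "gg (1-(1-l)) (1-l) (0^2) \<le> (Ufun (1-l)/2)*(0-1)^2"
      using l by (intro upper_all) auto
    then show ?thesis using Ufun_sym[OF l] unfolding gg_def eta_def by simp
  qed
  have a1: "(Lfun l/2) * p \<le> eta l * p" using L pq by (intro mult_right_mono) auto
  have a2: "eta l * p \<le> (Ufun l/2) * p" using U pq by (intro mult_right_mono) auto
  show ?thesis unfolding T h using a1 a2 by simp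
next
  case False
  then have q: "0 < q" using pq by simp
  define s where "s = sqrt (p/q)"
  have s0: "0 \<le> s" unfolding s_def using pq q by simp
  have ss: "s^2 = p/q" unfolding s_def using pq q by simp
  have T: "TT (1-l) l p q = q * gg (1-l) l (s^2)" unfolding ss using TT_q l pq q by simp
  have h: "(sqrt p - sqrt q)^2 = q * (s-1)^2"
  proof -
    have "sqrt p = s * sqrt q" unfolding s_def using q by (simp add: real_sqrt_divide)
    then have "(sqrt p - sqrt q)^2 = (sqrt q)^2 * (s-1)^2" by (simp add: power_mult_distrib[symmetric] algebra_simps)
    then show ?thesis using pq by simp
  qed
  have c1: "(Lfun l/2)*(s-1)^2 \<le> gg (1-l) l (s^2)" using lower_all l s0 by blast
  have c2: "gg (1-l) l (s^2) \<le> (Ufun l/2)*(s-1)^2" using upper_all l s0 by blast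
  have "q*((Lfun l/2)*(s-1)^2) \<le> q * gg (1-l) l (s^2)" using c1 q by (intro mult_left_mono) auto
  moreover have "q * gg (1-l) l (s^2) \<le> q*((Ufun l/2)*(s-1)^2)" using c2 q by (intro mult_left_mono) auto
  ultimately show ?thesis unfolding T h by (simp add: ac_simps)
qed

lemma KL_eq:
  fixes P M :: "'a::finite \<Rightarrow> real"
  assumes "\<And>i. 0 \<le> P i" "\<And>i. 0 < P i \<Longrightarrow> 0 < M i"
  shows "KL P M = (\<Sum>i\<in>UNIV. P i * ln (P i) - P i * ln (M i))"
proof -
  have "KL P M = (\<Sum>i | P i > 0. P i * ln (P i) - P i * ln (M i))"
    unfolding KL_def
  proof (rule sum.cong)
    fix i assume "i \<in> {i. P i > 0}"
    then have "0 < P i" "0 < M i" using assms by auto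
    then show "P i * ln (P i / M i) = P i * ln (P i) - P i * ln (M i)"
      by (simp add: ln_div algebra_simps)
  qed simp
  also have "\<dots> = (\<Sum>i\<in>UNIV. P i * ln (P i) - P i * ln (M i))"
  proof (rule sum.mono_neutral_left)
    show "\<forall>i\<in>UNIV - {i. P i > 0}. P i * ln (P i) - P i * ln (M i) = 0"
    proof
      fix i assume "i \<in> UNIV - {i. P i > 0}"
      then have "P i = 0" using assms(1)[of i] by auto
      then show "P i * ln (P i) - P i * ln (M i) = 0" by simp
    qed
  qed auto
  finally show ?thesis .
qed

lemma GJS_eq:
  fixes P Q :: "'a::finite \<Rightarrow> real"
  assumes "\<And>i. 0 \<le> P i" "\<And>i. 0 \<le> Q i" "0 < l" "l < 1"
  shows "GJS l P Q = (\<Sum>i\<in>UNIV. TT (1-l) l (P i) (Q i))"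
proof -
  define M where "M = (\<lambda>i. l * P i + (1 - l) * Q i)"
  have M1: "0 < M i" if "0 < P i" for i
    unfolding M_def using assms that by (smt (verit) mult_nonneg_nonneg mult_pos_pos)
  have M2: "0 < M i" if "0 < Q i" for i
    unfolding M_def using assms that by (smt (verit) mult_nonneg_nonneg mult_pos_pos)
  have "GJS l P Q = l * KL P M + (1-l) * KL Q M" unfolding GJS_def M_def Let_def by simp
  also have "\<dots> = l * (\<Sum>i\<in>UNIV. P i * ln (P i) - P i * ln (M i)) + (1-l) * (\<Sum>i\<in>UNIV. Q i * ln (Q i) - Q i * ln (M i))"
    using KL_eq[of P M] KL_eq[of Q M] assms M1 M2 by simp
  also have "\<dots> = (\<Sum>i\<in>UNIV. l * (P i * ln (P i) - P i * ln (M i)) + (1-l) * (Q i * ln (Q i) - Q i * ln (M i)))"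
    by (simp add: sum_distrib_left sum.distrib)
  also have "\<dots> = (\<Sum>i\<in>UNIV. TT (1-l) l (P i) (Q i))"
    by (rule sum.cong) (auto simp: TT_def M_def algebra_simps)
  finally show ?thesis .
qed

theorem theorem1:
  fixes P Q :: "'a::finite \<Rightarrow> real"
  assumes "is_distr P" and "is_distr Q" and "P \<noteq> Q"
  shows "(\<forall>l. 0 < l \<and> l < 1 \<longrightarrow>
            Lfun l * hellinger_sq P Q \<le> GJS l P Q \<and>
            GJS l P Q \<le> Ufun l * hellinger_sq P Q \<and>
            Ufun l * hellinger_sq P Q \<le> hellinger_sq P Q)
       \<and> ln 2 \<le> JS P Q / hellinger_sq P Q \<and> JS P Q / hellinger_sq P Q \<le> 1"
proof -
  have P0: "\<And>i. 0 \<le> P i" and Q0: "\<And>i. 0 \<le> Q i"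
    using assms(1,2) unfolding is_distr_def by auto
  define H where "H = hellinger_sq P Q"
  have H0: "0 \<le> H" unfolding H_def hellinger_sq_def by (simp add: sum_nonneg)
  have Hpos: "0 < H"
  proof -
    obtain j where j: "P j \<noteq> Q j" using assms(3) by auto
    have "sqrt (P j) \<noteq> sqrt (Q j)" using j P0 Q0 by simp
    then have "0 < (sqrt (P j) - sqrt (Q j))^2" by simp
    then have "0 < (\<Sum>i\<in>UNIV. (sqrt (P i) - sqrt (Q i))^2)"
      by (intro sum_pos2[where i=j]) auto
    then show ?thesis unfolding H_def hellinger_sq_def by simp
  qed
  have main: "Lfun l * H \<le> GJS l P Q \<and> GJS l P Q \<le> Ufun l * H \<and> Ufun l * H \<le> H"
    if l: "0 < l" "l < 1" for l
  proof -
    have G: "GJS l P Q = (\<Sum>i\<in>UNIV. TT (1-l) l (P i) (Q i))" using GJS_eq P0 Q0 l by blast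
    have HL: "c * H = (\<Sum>i\<in>UNIV. (c/2) * (sqrt (P i) - sqrt (Q i))^2)" for c
      unfolding H_def hellinger_sq_def by (simp add: sum_distrib_left)
    have "Lfun l * H \<le> GJS l P Q" unfolding HL G
      by (rule sum_mono) (use pointwise[OF l P0 Q0] in blast)
    moreover have "GJS l P Q \<le> Ufun l * H" unfolding HL G
      by (rule sum_mono) (use pointwise[OF l P0 Q0] in blast)
    moreover have "Ufun l * H \<le> H" using mult_right_mono[of "Ufun l" 1 H] Ufun_le[OF l] H0 by simp
    ultimately show ?thesis by blast
  qed
  have half: "Lfun (1/2) = ln 2" "Ufun (1/2) = 1"
  proof -
    have "ln (1/2::real) = - ln 2" by (simp add: ln_div)
    then show "Lfun (1/2) = ln 2" unfolding Lfun_def eta_def by simp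
    show "Ufun (1/2) = 1" unfolding Ufun_def by simp
  qed
  have J: "ln 2 * H \<le> JS P Q" "JS P Q \<le> H"
    using main[of "1/2"] half unfolding JS_def by auto
  have "ln 2 \<le> JS P Q / H" using J Hpos by (simp add: pos_le_divide_eq)
  moreover have "JS P Q / H \<le> 1" using J Hpos by (simp add: pos_divide_le_eq)
  ultimately show ?thesis using main unfolding H_def by blast
qed

end
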